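(* Let $G$ be a finite group and $\omega\in H^3(G,\mathbb{C}^\times)$ such that $\mathcal{Z}:=\mathcal{Z}(\mathrm{Vec}_G^\omega)$ has exactly three distinct twists $1,\theta,\eta$. Then either $G$ has exponent $3$ and the set of twists of $\mathcal{Z}$ is $\{1,\zeta_3,\zeta_3^2\}$, or $G$ has exponent $2$ or $4$ and the set of twists of $\mathcal{Z}$ is $\{1,\zeta_4,\zeta_4^3\}=\{1,i,-i\}$.
   Context: $\mathrm{Vec}_G^\omega$ is the fusion category of finite-dimensional $G$-graded vector spaces with associativity constraint twisted by the 3-cocycle $\omega$, with its canonical spherical structure (all simple objects of dimension $1$). $\mathcal{Z}(\mathrm{Vec}_G^\omega)$ is its Drinfeld center (twisted double), a modular fusion category; the twists are those of its simple objects. $\zeta_m=\exp(2\pi i/m)$. *)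

theory Defs
  imports "HOL-Algebra.Group" "Jordan_Normal_Form.Matrix"
begin

definition group_exponent :: "('g, 'b) monoid_scheme \<Rightarrow> nat" where
  "group_exponent G = (LEAST n. n > 0 \<and> (\<forall>x\<in>carrier G. x [^]\<^bsub>G\<^esub> n = \<one>\<^bsub>G\<^esub>))"

definition normalized_3_cocycle :: "('g, 'b) monoid_scheme \<Rightarrow> ('g \<Rightarrow> 'g \<Rightarrow> 'g \<Rightarrow> complex) \<Rightarrow> bool" where
  "normalized_3_cocycle G \<omega> \<longleftrightarrow>
     (\<forall>g\<in>carrier G. \<forall>h\<in>carrier G. \<forall>k\<in>carrier G. \<omega> g h k \<noteq> 0) \<and>
     (\<forall>g\<in>carrier G. \<forall>h\<in>carrier G. \<forall>k\<in>carrier G. \<forall>l\<in>carrier G.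
        \<omega> g h k * \<omega> g (h \<otimes>\<^bsub>G\<^esub> k) l * \<omega> h k l
        = \<omega> (g \<otimes>\<^bsub>G\<^esub> h) k l * \<omega> g h (k \<otimes>\<^bsub>G\<^esub> l)) \<and>
     (\<forall>g\<in>carrier G. \<forall>h\<in>carrier G.
        \<omega> \<one>\<^bsub>G\<^esub> g h = 1 \<and> \<omega> g \<one>\<^bsub>G\<^esub> h = 1 \<and> \<omega> g h \<one>\<^bsub>G\<^esub> = 1)"

definition centralizer_of :: "('g, 'b) monoid_scheme \<Rightarrow> 'g \<Rightarrow> 'g set" where
  "centralizer_of G a = {x \<in> carrier G. x \<otimes>\<^bsub>G\<^esub> a = a \<otimes>\<^bsub>G\<^esub> x}"

text \<open>The 2-cocycle on the centralizer of a induced by omega (twisted double).\<close>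
definition cocycle_beta :: "('g, 'b) monoid_scheme \<Rightarrow> ('g \<Rightarrow> 'g \<Rightarrow> 'g \<Rightarrow> complex) \<Rightarrow> 'g \<Rightarrow> 'g \<Rightarrow> 'g \<Rightarrow> complex" where
  "cocycle_beta G \<omega> a x y = \<omega> a x y * \<omega> x y a / \<omega> x a y"

definition proj_rep :: "('g, 'b) monoid_scheme \<Rightarrow> 'g set \<Rightarrow> ('g \<Rightarrow> 'g \<Rightarrow> complex) \<Rightarrow> nat \<Rightarrow> ('g \<Rightarrow> complex mat) \<Rightarrow> bool" where
  "proj_rep G H \<beta> n \<rho> \<longleftrightarrow> n > 0 \<and>
     (\<forall>x\<in>H. \<rho> x \<in> carrier_mat n n) \<and>
     \<rho> \<one>\<^bsub>G\<^esub> = 1\<^sub>m n \<and>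
     (\<forall>x\<in>H. \<forall>y\<in>H. \<rho> x * \<rho> y = \<beta> x y \<cdot>\<^sub>m \<rho> (x \<otimes>\<^bsub>G\<^esub> y))"

definition invariant_subspace :: "'g set \<Rightarrow> nat \<Rightarrow> ('g \<Rightarrow> complex mat) \<Rightarrow> complex vec set \<Rightarrow> bool" where
  "invariant_subspace H n \<rho> W \<longleftrightarrow> W \<subseteq> carrier_vec n \<and> 0\<^sub>v n \<in> W \<and>
     (\<forall>v\<in>W. \<forall>w\<in>W. v + w \<in> W) \<and> (\<forall>c. \<forall>v\<in>W. c \<cdot>\<^sub>v v \<in> W) \<and>
     (\<forall>x\<in>H. \<forall>v\<in>W. \<rho> x *\<^sub>v v \<in> W)"

definition irreducible_proj_rep :: "('g, 'b) monoid_scheme \<Rightarrow> 'g set \<Rightarrow> ('g \<Rightarrow> 'g \<Rightarrow> complex) \<Rightarrow> nat \<Rightarrow> ('g \<Rightarrow> complex mat) \<Rightarrow> bool" where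
  "irreducible_proj_rep G H \<beta> n \<rho> \<longleftrightarrow> proj_rep G H \<beta> n \<rho> \<and>
     (\<forall>W. invariant_subspace H n \<rho> W \<longrightarrow> W = {0\<^sub>v n} \<or> W = carrier_vec n)"

text \<open>Twists of the simple objects of Z(Vec_G^omega): simple objects are pairs (a, rho) with
  rho an irreducible beta_a-projective representation of C_G(a); the twist is the scalar
  by which rho(a) acts.\<close>
definition center_twists :: "('g, 'b) monoid_scheme \<Rightarrow> ('g \<Rightarrow> 'g \<Rightarrow> 'g \<Rightarrow> complex) \<Rightarrow> complex set" where
  "center_twists G \<omega> = {t. \<exists>a\<in>carrier G. \<exists>n \<rho>.
       irreducible_proj_rep G (centralizer_of G a) (cocycle_beta G \<omega> a) n \<rho> \<and> \<rho> a = t \<cdot>\<^sub>m 1\<^sub>m n}"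

end

theory Submission
  imports Defs "Jordan_Normal_Form.Gram_Schmidt" "HOL-Algebra.Multiplicative_Group"
begin


lemma subspace_basis:
  fixes W :: "complex vec set"
  assumes Wc: "W \<subseteq> carrier_vec k" and W0: "0\<^sub>v k \<in> W" and Wadd: "\<forall>v\<in>W. \<forall>w\<in>W. v + w \<in> W"
    and Wsm: "\<forall>c. \<forall>v\<in>W. c \<cdot>\<^sub>v v \<in> W"
  shows "\<exists>d B P. B \<in> carrier_mat k d \<and> P \<in> carrier_mat d k \<and> P * B = 1\<^sub>m d \<and> d \<le> k \<and>
     (\<forall>c\<in>carrier_vec d. B *\<^sub>v c \<in> W) \<and> (\<forall>w\<in>W. \<exists>c\<in>carrier_vec d. w = B *\<^sub>v c)"
proof -
  interpret V: cof_vec_space k "TYPE(complex)" .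
  have sub: "submodule class_ring W V.V"
    by (unfold_locales) (use Wc W0 Wadd Wsm in auto)
  let ?Q = "\<lambda>S. S \<subseteq> W \<and> V.lin_indpt S"
  have bnd: "finite S \<and> card S \<le> k" if "?Q S" for S
    using V.li_le_dim[of S] that Wc V.dim_is_n by auto
  have "?Q {}" unfolding V.lin_dep_def by auto
  from maximal_exists[of ?Q k "{}", OF bnd this]
  obtain A where finA: "finite A" and maxA: "maximal A ?Q" by blast
  have AW: "A \<subseteq> W" and liA: "V.lin_indpt A" using maxA unfolding maximal_def by auto
  have Ac: "A \<subseteq> carrier_vec k" using AW Wc by auto
  have "V.span A \<subseteq> W" using V.span_is_subset[OF AW sub] .
  moreover have "W \<subseteq> V.span A"
  proof
    fix w assume w: "w \<in> W"
    show "w \<in> V.span A"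
    proof (rule ccontr)
      assume nw: "w \<notin> V.span A"
      have "w \<notin> A" using nw V.in_own_span[OF Ac] by auto
      then have "V.lin_indpt (A \<union> {w})"
        using V.lin_dep_iff_in_span[OF Ac liA _ \<open>w \<notin> A\<close>] w Wc nw by auto
      then have "?Q (A \<union> {w})" using AW w by auto
      then have "A \<union> {w} = A" using maxA unfolding maximal_def by blast
      then show False using \<open>w \<notin> A\<close> by auto
    qed
  qed
  ultimately have spanA: "V.span A = W" by auto
  obtain ws where ws: "set ws = A" "distinct ws" using finite_distinct_list[OF finA] by blast
  have lenk: "length ws \<le> k" using bnd[of A] AW liA ws distinct_card[OF ws(2)] by auto
  define us where "us = gram_schmidt k ws"
  note gs = V.gram_schmidt_result[OF _ ws(2) _ us_def, unfolded ws(1), OF Ac liA]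
  define d where "d = length us"
  define B where "B = mat_of_cols k us"
  define P where "P = mat d k (\<lambda>(i,j). conjugate (us ! i $ j) / (us ! i \<bullet>c us ! i))"
  have usc: "\<And>i. i < d \<Longrightarrow> us ! i \<in> carrier_vec k" using gs(3) d_def by auto
  have Bc: "B \<in> carrier_mat k d" unfolding B_def d_def by simp
  have Pc: "P \<in> carrier_mat d k" unfolding P_def by simp
  have PB: "P * B = 1\<^sub>m d"
  proof (rule eq_matI)
    fix i j assume i: "i < dim_row (1\<^sub>m d)" and j: "j < dim_col (1\<^sub>m d)"
    then have i: "i < d" and j: "j < d" by auto
    have "(P * B) $$ (i,j) = (\<Sum>l<k. conjugate (us ! i $ l) / (us ! i \<bullet>c us ! i) * us ! j $ l)"
      using i j Bc Pc unfolding P_def B_def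
      by (simp add: index_mult_mat row_def col_def scalar_prod_def mat_of_cols_index d_def lessThan_atLeast0)
    also have "\<dots> = (us ! j \<bullet>c us ! i) / (us ! i \<bullet>c us ! i)"
      using usc[OF i] usc[OF j]
      by (simp add: scalar_prod_def sum_divide_distrib lessThan_atLeast0 mult.commute)
    also have "\<dots> = (if i = j then 1 else 0)"
      using corthogonalD[OF gs(2), of i j] corthogonalD[OF gs(2), of j i] corthogonalD[OF gs(2), of i i] i j d_def
      by auto
    finally show "(P * B) $$ (i,j) = 1\<^sub>m d $$ (i,j)" using i j by simp
  qed (use Bc Pc in auto)
  have spanus: "V.span (set us) = W" using gs(1) spanA by simp
  have dimus: "\<forall>w \<in> set us. dim_vec w = k" using gs(3) by auto
  have span_eq: "V.span (set us) = {B *\<^sub>v c | c. c \<in> carrier_vec d}"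
  proof -
    have "V.span (set us) = V.span_list us" using V.span_list_as_span[OF gs(3)] by simp
    also have "\<dots> = {B *\<^sub>v c | c. c \<in> carrier_vec d}"
    proof safe
      fix x assume "x \<in> V.span_list us"
      then obtain c where "x = V.lincomb_list c us" by (metis V.in_span_listE)
      then show "\<exists>c'. x = B *\<^sub>v c' \<and> c' \<in> carrier_vec d"
        using V.lincomb_list_as_mat_mult[OF dimus] unfolding B_def d_def by auto
    next
      fix c :: "complex vec" assume c: "c \<in> carrier_vec d"
      have "B *\<^sub>v c = V.lincomb_list (\<lambda>i. c $ i) us"
        using V.lincomb_list_as_mat_mult[OF dimus] c unfolding B_def d_def
        by (metis carrier_vecD eq_vecI index_vec dim_vec)
      then show "B *\<^sub>v c \<in> V.span_list us" by (metis V.in_span_listI)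
    qed
    finally show ?thesis .
  qed
  have "d \<le> k" using gs(4) lenk d_def by simp
  then show ?thesis using Bc Pc PB span_eq spanus by blast
qed




lemma smult_mat_mult_vec:
  fixes A :: "complex mat"
  assumes "A \<in> carrier_mat n m" "v \<in> carrier_vec m"
  shows "(k \<cdot>\<^sub>m A) *\<^sub>v v = k \<cdot>\<^sub>v (A *\<^sub>v v)"
proof (rule eq_vecI)
  fix i assume "i < dim_vec (k \<cdot>\<^sub>v (A *\<^sub>v v))"
  then have i: "i < n" using assms by simp
  have "row A i \<in> carrier_vec m" using assms i by auto
  then show "((k \<cdot>\<^sub>m A) *\<^sub>v v) $ i = (k \<cdot>\<^sub>v (A *\<^sub>v v)) $ i"
    using assms i by simp
qed (use assms in simp)

lemma mat_eq_by_vec: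
  fixes A A' :: "complex mat"
  assumes "A \<in> carrier_mat k d" "A' \<in> carrier_mat k d"
    and "\<And>c. c \<in> carrier_vec d \<Longrightarrow> A *\<^sub>v c = A' *\<^sub>v c"
  shows "A = A'"
proof (rule eq_matI)
  fix i j assume i: "i < dim_row A'" and j: "j < dim_col A'"
  have "A *\<^sub>v unit_vec d j = A' *\<^sub>v unit_vec d j" using assms(3) by simp
  then have "(A *\<^sub>v unit_vec d j) $ i = (A' *\<^sub>v unit_vec d j) $ i" by simp
  then show "A $$ (i,j) = A' $$ (i,j)" using assms(1,2) i j by simp
qed (use assms in auto)

lemma restrict_rep:
  fixes \<rho> :: "'g \<Rightarrow> complex mat"
  assumes rep: "proj_rep G H \<beta> k \<rho>" and inv: "invariant_subspace H k \<rho> W" and Wn0: "W \<noteq> {0\<^sub>v k}"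
    and aH: "a \<in> H" and Hmul: "\<forall>x\<in>H. \<forall>y\<in>H. x \<otimes>\<^bsub>G\<^esub> y \<in> H" and eig: "\<forall>w\<in>W. \<rho> a *\<^sub>v w = lam \<cdot>\<^sub>v w"
  shows "\<exists>d \<sigma>. proj_rep G H \<beta> d \<sigma> \<and> \<sigma> a = lam \<cdot>\<^sub>m 1\<^sub>m d \<and> d \<le> k \<and> (W \<noteq> carrier_vec k \<longrightarrow> d < k)"
proof -
  have Wc: "W \<subseteq> carrier_vec k" and W0: "0\<^sub>v k \<in> W" and Wadd: "\<forall>v\<in>W. \<forall>w\<in>W. v + w \<in> W"
    and Wsm: "\<forall>c. \<forall>v\<in>W. c \<cdot>\<^sub>v v \<in> W" and Winv: "\<forall>x\<in>H. \<forall>v\<in>W. \<rho> x *\<^sub>v v \<in> W"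
    using inv unfolding invariant_subspace_def by auto
  have kpos: "k > 0" and rc: "\<forall>x\<in>H. \<rho> x \<in> carrier_mat k k" and r1: "\<rho> \<one>\<^bsub>G\<^esub> = 1\<^sub>m k"
    and rm: "\<forall>x\<in>H. \<forall>y\<in>H. \<rho> x * \<rho> y = \<beta> x y \<cdot>\<^sub>m \<rho> (x \<otimes>\<^bsub>G\<^esub> y)"
    using rep unfolding proj_rep_def by auto
  obtain d B P where Bc: "B \<in> carrier_mat k d" and Pc: "P \<in> carrier_mat d k" and PB: "P * B = 1\<^sub>m d"
    and dk: "d \<le> k" and BW: "\<forall>c\<in>carrier_vec d. B *\<^sub>v c \<in> W" and WB: "\<forall>w\<in>W. \<exists>c\<in>carrier_vec d. w = B *\<^sub>v c"
    using subspace_basis[OF Wc W0 Wadd Wsm] by blast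
  have BPw: "B *\<^sub>v (P *\<^sub>v w) = w" if w: "w \<in> W" for w
  proof -
    obtain c where c: "c \<in> carrier_vec d" "w = B *\<^sub>v c" using WB w by blast
    have "P *\<^sub>v (B *\<^sub>v c) = c" using assoc_mult_mat_vec[OF Pc Bc c(1)] PB c(1) by simp
    then show ?thesis using c by simp
  qed
  define \<sigma> where "\<sigma> x = P * \<rho> x * B" for x
  have sc: "\<sigma> x \<in> carrier_mat d d" if "x \<in> H" for x
    using rc that Pc Bc unfolding \<sigma>_def by auto
  have sv: "\<sigma> x *\<^sub>v c = P *\<^sub>v (\<rho> x *\<^sub>v (B *\<^sub>v c))" if "x \<in> H" "c \<in> carrier_vec d" for x c
  proof -
    have rx: "\<rho> x \<in> carrier_mat k k" using rc that by auto
    have Bcv: "B *\<^sub>v c \<in> carrier_vec k" using mult_mat_vec_carrier[OF Bc that(2)] .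
    have "\<sigma> x *\<^sub>v c = (P * \<rho> x) *\<^sub>v (B *\<^sub>v c)"
      unfolding \<sigma>_def using assoc_mult_mat_vec[OF mult_carrier_mat[OF Pc rx] Bc that(2)] .
    also have "\<dots> = P *\<^sub>v (\<rho> x *\<^sub>v (B *\<^sub>v c))" using assoc_mult_mat_vec[OF Pc rx Bcv] .
    finally show ?thesis .
  qed
  have dpos: "d > 0"
  proof (rule ccontr)
    assume "\<not> d > 0"
    then have d0: "d = 0" by simp
    have "w = 0\<^sub>v k" if "w \<in> W" for w
    proof -
      obtain c where c: "c \<in> carrier_vec d" "w = B *\<^sub>v c" using WB \<open>w \<in> W\<close> by blast
      show ?thesis using c Bc d0 by (intro eq_vecI) (auto simp: scalar_prod_def)
    qed
    then have "W = {0\<^sub>v k}" using W0 by blast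
    then show False using Wn0 by blast
  qed
  have s1: "\<sigma> \<one>\<^bsub>G\<^esub> = 1\<^sub>m d" unfolding \<sigma>_def r1 using Pc PB by simp
  have smul: "\<sigma> x * \<sigma> y = \<beta> x y \<cdot>\<^sub>m \<sigma> (x \<otimes>\<^bsub>G\<^esub> y)" if x: "x \<in> H" and y: "y \<in> H" for x y
  proof -
    have xy: "x \<otimes>\<^bsub>G\<^esub> y \<in> H" using Hmul x y by blast
    show ?thesis
    proof (rule mat_eq_by_vec)
      show "\<sigma> x * \<sigma> y \<in> carrier_mat d d" using mult_carrier_mat[OF sc[OF x] sc[OF y]] .
      show "\<beta> x y \<cdot>\<^sub>m \<sigma> (x \<otimes>\<^bsub>G\<^esub> y) \<in> carrier_mat d d" using sc xy by auto
      fix c :: "complex vec" assume c: "c \<in> carrier_vec d"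
      have Bc': "B *\<^sub>v c \<in> W" using BW c by auto
      have Bcv: "B *\<^sub>v c \<in> carrier_vec k" using mult_mat_vec_carrier[OF Bc c] .
      have rx: "\<rho> x \<in> carrier_mat k k" and ry: "\<rho> y \<in> carrier_mat k k" and rxy: "\<rho> (x \<otimes>\<^bsub>G\<^esub> y) \<in> carrier_mat k k"
        using rc x y xy by auto
      have ryW: "\<rho> y *\<^sub>v (B *\<^sub>v c) \<in> W" using Winv y Bc' by auto
      have ryv: "\<rho> y *\<^sub>v (B *\<^sub>v c) \<in> carrier_vec k" using mult_mat_vec_carrier[OF ry Bcv] .
      have Pyv: "P *\<^sub>v (\<rho> y *\<^sub>v (B *\<^sub>v c)) \<in> carrier_vec d" using mult_mat_vec_carrier[OF Pc ryv] .
      have rxyv: "\<rho> (x \<otimes>\<^bsub>G\<^esub> y) *\<^sub>v (B *\<^sub>v c) \<in> carrier_vec k" using mult_mat_vec_carrier[OF rxy Bcv] .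
      have "(\<sigma> x * \<sigma> y) *\<^sub>v c = \<sigma> x *\<^sub>v (\<sigma> y *\<^sub>v c)" using assoc_mult_mat_vec[OF sc[OF x] sc[OF y] c] .
      also have "\<dots> = P *\<^sub>v (\<rho> x *\<^sub>v (B *\<^sub>v (P *\<^sub>v (\<rho> y *\<^sub>v (B *\<^sub>v c)))))"
        unfolding sv[OF y c] sv[OF x Pyv] ..
      also have "\<dots> = P *\<^sub>v (\<rho> x *\<^sub>v (\<rho> y *\<^sub>v (B *\<^sub>v c)))" unfolding BPw[OF ryW] ..
      also have "\<dots> = P *\<^sub>v ((\<rho> x * \<rho> y) *\<^sub>v (B *\<^sub>v c))" unfolding assoc_mult_mat_vec[OF rx ry Bcv] ..
      also have "\<dots> = P *\<^sub>v (\<beta> x y \<cdot>\<^sub>v (\<rho> (x \<otimes>\<^bsub>G\<^esub> y) *\<^sub>v (B *\<^sub>v c)))"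
        unfolding rm[rule_format, OF x y] smult_mat_mult_vec[OF rxy Bcv] ..
      also have "\<dots> = \<beta> x y \<cdot>\<^sub>v (P *\<^sub>v (\<rho> (x \<otimes>\<^bsub>G\<^esub> y) *\<^sub>v (B *\<^sub>v c)))"
        using mult_mat_vec[OF Pc rxyv] .
      also have "\<dots> = (\<beta> x y \<cdot>\<^sub>m \<sigma> (x \<otimes>\<^bsub>G\<^esub> y)) *\<^sub>v c"
        unfolding smult_mat_mult_vec[OF sc[OF xy] c] sv[OF xy c] ..
      finally show "(\<sigma> x * \<sigma> y) *\<^sub>v c = (\<beta> x y \<cdot>\<^sub>m \<sigma> (x \<otimes>\<^bsub>G\<^esub> y)) *\<^sub>v c" .
    qed
  qed
  have sa: "\<sigma> a = lam \<cdot>\<^sub>m 1\<^sub>m d"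
  proof (rule mat_eq_by_vec)
    show "\<sigma> a \<in> carrier_mat d d" using sc aH by auto
    show "lam \<cdot>\<^sub>m 1\<^sub>m d \<in> carrier_mat d d" by auto
    fix c :: "complex vec" assume c: "c \<in> carrier_vec d"
    have Bcv: "B *\<^sub>v c \<in> carrier_vec k" using mult_mat_vec_carrier[OF Bc c] .
    have "\<sigma> a *\<^sub>v c = P *\<^sub>v (lam \<cdot>\<^sub>v (B *\<^sub>v c))"
      unfolding sv[OF aH c] eig[rule_format, OF BW[rule_format, OF c]] ..
    also have "\<dots> = lam \<cdot>\<^sub>v (P *\<^sub>v (B *\<^sub>v c))" using mult_mat_vec[OF Pc Bcv] .
    also have "\<dots> = lam \<cdot>\<^sub>v c" unfolding assoc_mult_mat_vec[OF Pc Bc c, symmetric] PB using c by simp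
    also have "\<dots> = (lam \<cdot>\<^sub>m 1\<^sub>m d) *\<^sub>v c" using smult_mat_mult_vec[of "1\<^sub>m d" d d c lam] c by simp
    finally show "\<sigma> a *\<^sub>v c = (lam \<cdot>\<^sub>m 1\<^sub>m d) *\<^sub>v c" .
  qed
  have "d < k" if "W \<noteq> carrier_vec k"
  proof (rule ccontr)
    assume "\<not> d < k"
    then have dk': "d = k" using dk by simp
    have BP: "B * P = 1\<^sub>m k" using mat_mult_left_right_inverse[of P k B] Pc Bc PB dk' by auto
    have "v \<in> W" if v: "v \<in> carrier_vec k" for v
    proof -
      have "v = B *\<^sub>v (P *\<^sub>v v)" using assoc_mult_mat_vec[OF Bc Pc, of v] BP v dk' by simp
      moreover have "P *\<^sub>v v \<in> carrier_vec d" using mult_mat_vec_carrier[OF Pc v] .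
      ultimately show ?thesis using BW by metis
    qed
    then show False using that Wc by auto
  qed
  then show ?thesis using dpos sc s1 smul sa dk unfolding proj_rep_def by blast
qed




lemma alg_cocycle:
  fixes cax cbx ccx cdx cex cfx cgx chx cix cjx ckx clx dax dbx dcx ddx :: complex
  assumes nz: "ccx \<noteq> 0" "cfx \<noteq> 0" "cix \<noteq> 0" "clx \<noteq> 0" "dax \<noteq> 0" "dcx \<noteq> 0"
    and E1: "dax * cdx * cax = dbx * cgx"
    and E2: "cjx * dcx * ccx = dbx * cix"
    and E3: "clx * dcx * cbx = cfx * ddx"
    and E4: "ckx * chx * dax = cex * ddx"
  shows "(cax * cbx / ccx) * (cdx * cex / cfx) = (cgx * chx / cix) * (cjx * ckx / clx)"
proof -
  have "cax*cbx*cdx*cex*cix*clx*(dax*dcx) = (dax*cdx*cax)*(clx*dcx*cbx)*cex*cix" by (simp add: algebra_simps)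
  also have "\<dots> = (dbx*cgx)*(cfx*ddx)*cex*cix" by (simp only: E1 E3)
  also have "\<dots> = cgx*cfx*(dbx*cix)*(cex*ddx)" by (simp add: algebra_simps)
  also have "\<dots> = cgx*cfx*(cjx*dcx*ccx)*(ckx*chx*dax)" by (simp only: E2 E4)
  also have "\<dots> = cgx*chx*cjx*ckx*ccx*cfx*(dax*dcx)" by (simp add: algebra_simps)
  finally have "cax*cbx*cdx*cex*cix*clx = cgx*chx*cjx*ckx*ccx*cfx" using nz by simp
  then show ?thesis using nz by (simp add: field_simps)
qed

definition pp :: "('g, 'b) monoid_scheme \<Rightarrow> ('g \<Rightarrow> 'g \<Rightarrow> 'g \<Rightarrow> complex) \<Rightarrow> 'g \<Rightarrow> nat \<Rightarrow> complex" where
  "pp G \<omega> a j = (\<Prod>i<j. cocycle_beta G \<omega> a a (a [^]\<^bsub>G\<^esub> i))"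

context
  fixes G (structure) and \<omega> and a
  assumes grp: "group G" and coc: "normalized_3_cocycle G \<omega>" and aG: "a \<in> carrier G"
begin

interpretation group G by (rule grp)

lemma om_nz: "x \<in> carrier G \<Longrightarrow> y \<in> carrier G \<Longrightarrow> z \<in> carrier G \<Longrightarrow> \<omega> x y z \<noteq> 0"
  using coc unfolding normalized_3_cocycle_def by blast

lemma om_coc: "g \<in> carrier G \<Longrightarrow> h \<in> carrier G \<Longrightarrow> k \<in> carrier G \<Longrightarrow> l \<in> carrier G \<Longrightarrow>
   \<omega> g h k * \<omega> g (h \<otimes> k) l * \<omega> h k l = \<omega> (g \<otimes> h) k l * \<omega> g h (k \<otimes> l)"
  using coc unfolding normalized_3_cocycle_def by blast

lemma om_norm: "g \<in> carrier G \<Longrightarrow> h \<in> carrier G \<Longrightarrow>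
   \<omega> \<one> g h = 1 \<and> \<omega> g \<one> h = 1 \<and> \<omega> g h \<one> = 1"
  using coc unfolding normalized_3_cocycle_def by blast

abbreviation "H \<equiv> centralizer_of G a"
abbreviation "\<beta> \<equiv> cocycle_beta G \<omega> a"

lemma H_sub: "H \<subseteq> carrier G" unfolding centralizer_of_def by auto
lemma H_mult: "x \<in> H \<Longrightarrow> y \<in> H \<Longrightarrow> x \<otimes> y \<in> H"
  unfolding centralizer_of_def using aG by (auto simp: m_assoc) (metis m_assoc)
lemma H_one: "\<one> \<in> H" unfolding centralizer_of_def using aG by auto
lemma H_a: "a \<in> H" unfolding centralizer_of_def using aG by auto
lemma H_pow: "a [^] (j::nat) \<in> H"
  unfolding centralizer_of_def using aG by (auto simp: nat_pow_Suc2[symmetric] simp del: nat_pow_Suc)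
lemma H_comm: "x \<in> H \<Longrightarrow> x \<otimes> a = a \<otimes> x" unfolding centralizer_of_def by auto

lemma beta_nz: "x \<in> carrier G \<Longrightarrow> y \<in> carrier G \<Longrightarrow> \<beta> x y \<noteq> 0"
  unfolding cocycle_beta_def using om_nz aG by auto

lemma beta_one_left: "y \<in> carrier G \<Longrightarrow> \<beta> \<one> y = 1"
  unfolding cocycle_beta_def using om_norm aG by auto

lemma beta_a_comm: "x \<in> H \<Longrightarrow> \<beta> a x = \<beta> x a"
proof -
  assume x: "x \<in> H"
  then have xG: "x \<in> carrier G" using H_sub by auto
  show ?thesis unfolding cocycle_beta_def using om_nz[OF aG aG xG] om_nz[OF xG aG aG] by simp
qed

lemma beta_cocycle:
  assumes x: "x \<in> H" and y: "y \<in> H" and z: "z \<in> H"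
  shows "\<beta> x y * \<beta> (x \<otimes> y) z = \<beta> x (y \<otimes> z) * \<beta> y z"
proof -
  have xG: "x \<in> carrier G" and yG: "y \<in> carrier G" and zG: "z \<in> carrier G" using x y z H_sub by auto
  have cx: "x \<otimes> a = a \<otimes> x" and cy: "y \<otimes> a = a \<otimes> y" and cz: "z \<otimes> a = a \<otimes> z"
    using H_comm x y z by auto
  note E1 = om_coc[OF aG xG yG zG]
  note E2 = om_coc[OF xG aG yG zG]
  note E3 = om_coc[OF xG yG aG zG]
  note E4 = om_coc[OF xG yG zG aG]
  have xy: "x \<otimes> y \<in> carrier G" and yz: "y \<otimes> z \<in> carrier G" and ay: "a \<otimes> y \<in> carrier G"
    and az: "a \<otimes> z \<in> carrier G" and ax: "a \<otimes> x \<in> carrier G" using xG yG zG aG by auto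
  have "(\<omega> a x y * \<omega> x y a / \<omega> x a y) * (\<omega> a (x \<otimes> y) z * \<omega> (x \<otimes> y) z a / \<omega> (x \<otimes> y) a z)
     = (\<omega> a x (y \<otimes> z) * \<omega> x (y \<otimes> z) a / \<omega> x a (y \<otimes> z)) * (\<omega> a y z * \<omega> y z a / \<omega> y a z)"
  proof (rule alg_cocycle[where dax = "\<omega> x y z" and dbx = "\<omega> (a \<otimes> x) y z" and dcx = "\<omega> x (a \<otimes> y) z"
        and ddx = "\<omega> x y (a \<otimes> z)"])
    show "\<omega> x a y \<noteq> 0" "\<omega> (x \<otimes> y) a z \<noteq> 0" "\<omega> x a (y \<otimes> z) \<noteq> 0" "\<omega> y a z \<noteq> 0"
      "\<omega> x y z \<noteq> 0" "\<omega> x (a \<otimes> y) z \<noteq> 0"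
      using om_nz xG yG zG aG xy yz ay by auto
    show "\<omega> x y z * \<omega> a (x \<otimes> y) z * \<omega> a x y = \<omega> (a \<otimes> x) y z * \<omega> a x (y \<otimes> z)"
      using E1 by (simp add: ac_simps)
    show "\<omega> a y z * \<omega> x (a \<otimes> y) z * \<omega> x a y = \<omega> (a \<otimes> x) y z * \<omega> x a (y \<otimes> z)"
      using E2 cx by (simp add: ac_simps)
    show "\<omega> y a z * \<omega> x (a \<otimes> y) z * \<omega> x y a = \<omega> (x \<otimes> y) a z * \<omega> x y (a \<otimes> z)"
      using E3 cy by (simp add: ac_simps)
    show "\<omega> y z a * \<omega> x (y \<otimes> z) a * \<omega> x y z = \<omega> (x \<otimes> y) z a * \<omega> x y (a \<otimes> z)"
      using E4 cz by (simp add: ac_simps)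
  qed
  then show ?thesis unfolding cocycle_beta_def .
qed


lemma H_inv: "inv a \<in> H"
  unfolding centralizer_of_def using aG
  by auto

lemma pp_Suc: "pp G \<omega> a (Suc j) = pp G \<omega> a j * \<beta> a (a [^] j)"
  unfolding pp_def by simp

lemma pp_nz: "pp G \<omega> a j \<noteq> 0"
  unfolding pp_def using beta_nz aG by (auto simp: prod_zero_iff)

lemma twist_root:
  assumes rep: "proj_rep G H \<beta> k \<rho>" and ra: "\<rho> a = t \<cdot>\<^sub>m 1\<^sub>m k"
  shows "t ^ ord a = pp G \<omega> a (ord a)"
proof -
  have kpos: "k > 0" and rc: "\<forall>x\<in>H. \<rho> x \<in> carrier_mat k k" and r1: "\<rho> \<one> = 1\<^sub>m k"
    and rm: "\<forall>x\<in>H. \<forall>y\<in>H. \<rho> x * \<rho> y = \<beta> x y \<cdot>\<^sub>m \<rho> (x \<otimes> y)"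
    using rep unfolding proj_rep_def by auto
  have claim: "pp G \<omega> a j \<cdot>\<^sub>m \<rho> (a [^] j) = t ^ j \<cdot>\<^sub>m 1\<^sub>m k" for j
  proof (induction j)
    case 0
    then show ?case by (simp add: pp_def r1)
  next
    case (Suc j)
    have rj: "\<rho> (a [^] j) \<in> carrier_mat k k" using rc H_pow by auto
    have "pp G \<omega> a (Suc j) \<cdot>\<^sub>m \<rho> (a [^] Suc j) = pp G \<omega> a j \<cdot>\<^sub>m (\<beta> a (a [^] j) \<cdot>\<^sub>m \<rho> (a \<otimes> a [^] j))"
      unfolding pp_Suc nat_pow_Suc2[OF aG] by (rule eq_matI) auto
    also have "\<dots> = pp G \<omega> a j \<cdot>\<^sub>m (\<rho> a * \<rho> (a [^] j))" using rm H_a H_pow by simp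
    also have "\<dots> = \<rho> a * (pp G \<omega> a j \<cdot>\<^sub>m \<rho> (a [^] j))"
      using mult_smult_distrib[of "\<rho> a" k k "\<rho> (a [^] j)" k] rc H_a rj by simp
    also have "\<dots> = (t \<cdot>\<^sub>m 1\<^sub>m k) * (t ^ j \<cdot>\<^sub>m 1\<^sub>m k)" using Suc ra by simp
    also have "\<dots> = t ^ Suc j \<cdot>\<^sub>m 1\<^sub>m k"
    proof -
      have "(t \<cdot>\<^sub>m 1\<^sub>m k) * (t ^ j \<cdot>\<^sub>m 1\<^sub>m k) = t \<cdot>\<^sub>m (1\<^sub>m k * (t ^ j \<cdot>\<^sub>m 1\<^sub>m k))"
        by (rule mult_smult_assoc_mat) auto
      also have "\<dots> = t \<cdot>\<^sub>m (t ^ j \<cdot>\<^sub>m 1\<^sub>m k)" by simp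
      also have "\<dots> = t ^ Suc j \<cdot>\<^sub>m 1\<^sub>m k" by (rule eq_matI) auto
      finally show ?thesis .
    qed
    finally show ?case .
  qed
  have "pp G \<omega> a (ord a) \<cdot>\<^sub>m 1\<^sub>m k = t ^ ord a \<cdot>\<^sub>m 1\<^sub>m k"
    using claim[of "ord a"] aG r1 by simp
  then have "(pp G \<omega> a (ord a) \<cdot>\<^sub>m 1\<^sub>m k) $$ (0,0) = (t ^ ord a \<cdot>\<^sub>m 1\<^sub>m k) $$ (0,0)" by simp
  then show ?thesis using kpos by simp
qed


lemma H_fin: "finite (carrier G) \<Longrightarrow> finite H" using H_sub finite_subset by blast

lemma regular_rep:
  assumes fin: "finite (carrier G)"
    and feig: "\<forall>g\<in>H. \<beta> a g * f g = lam * f (a \<otimes> g)" and f1: "f \<one> \<noteq> 0"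
  shows "\<exists>m L. proj_rep G H \<beta> m L \<and> (\<exists>v\<in>carrier_vec m. v \<noteq> 0\<^sub>v m \<and> L a *\<^sub>v v = lam \<cdot>\<^sub>v v)"
proof -
  obtain e where e: "bij_betw e {0..<card H} H" using ex_bij_betw_nat_finite[OF H_fin[OF fin]] by blast
  define m where "m = card H"
  have eH: "i < m \<Longrightarrow> e i \<in> H" for i using e unfolding m_def bij_betw_def by auto
  have einj: "i < m \<Longrightarrow> j < m \<Longrightarrow> e i = e j \<longleftrightarrow> i = j" for i j
    using e unfolding m_def bij_betw_def inj_on_def by auto
  have esurj: "h \<in> H \<Longrightarrow> \<exists>i<m. e i = h" for h
  proof -
    assume "h \<in> H"
    then have "h \<in> e ` {0..<m}" using e unfolding m_def bij_betw_def by auto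
    then show ?thesis by auto
  qed
  have mpos: "m > 0" using esurj[OF H_one] by auto
  define L where "L x = mat m m (\<lambda>(i,j). if e i = x \<otimes> e j then \<beta> x (e j) else 0)" for x
  have Lc: "L x \<in> carrier_mat m m" for x unfolding L_def by simp
  have L1: "L \<one> = 1\<^sub>m m"
  proof (rule eq_matI)
    fix i j assume "i < dim_row (1\<^sub>m m)" "j < dim_col (1\<^sub>m m)"
    then have i: "i < m" and j: "j < m" by auto
    have ejG: "e j \<in> carrier G" using eH[OF j] H_sub by auto
    show "L \<one> $$ (i,j) = 1\<^sub>m m $$ (i,j)"
      unfolding L_def using i j einj[OF i j] beta_one_left[OF ejG] ejG by simp
  qed (auto simp: L_def)
  have Lmul: "L x * L y = \<beta> x y \<cdot>\<^sub>m L (x \<otimes> y)" if x: "x \<in> H" and y: "y \<in> H" for x y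
  proof (rule eq_matI)
    fix i j assume "i < dim_row (\<beta> x y \<cdot>\<^sub>m L (x \<otimes> y))" "j < dim_col (\<beta> x y \<cdot>\<^sub>m L (x \<otimes> y))"
    then have i: "i < m" and j: "j < m" by (auto simp: L_def)
    have ej: "e j \<in> H" using eH[OF j] .
    obtain k0 where k0: "k0 < m" "e k0 = y \<otimes> e j" using esurj[OF H_mult[OF y ej]] by blast
    have xG: "x \<in> carrier G" and yG: "y \<in> carrier G" and ejG: "e j \<in> carrier G"
      using x y ej H_sub by auto
    have Ly: "L y $$ (k, j) = (if k = k0 then \<beta> y (e j) else 0)" if k: "k < m" for k
      using k j k0 einj[OF k k0(1)] unfolding L_def by auto
    have "(L x * L y) $$ (i,j) = (\<Sum>k = 0..<m. L x $$ (i,k) * L y $$ (k,j))"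
      using i j by (simp add: L_def[of x] L_def[of y] scalar_prod_def)
    also have "\<dots> = (\<Sum>k = 0..<m. if k = k0 then L x $$ (i,k0) * \<beta> y (e j) else 0)"
      by (rule sum.cong) (auto simp: Ly)
    also have "\<dots> = L x $$ (i,k0) * \<beta> y (e j)" using k0 by simp
    also have "\<dots> = (if e i = x \<otimes> (y \<otimes> e j) then \<beta> x (y \<otimes> e j) * \<beta> y (e j) else 0)"
      using i k0 unfolding L_def by simp
    also have "\<dots> = \<beta> x y * (if e i = (x \<otimes> y) \<otimes> e j then \<beta> (x \<otimes> y) (e j) else 0)"
      using beta_cocycle[OF x y ej] m_assoc[OF xG yG ejG] by (auto simp: ac_simps)
    also have "\<dots> = (\<beta> x y \<cdot>\<^sub>m L (x \<otimes> y)) $$ (i,j)" using i j unfolding L_def by simp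
    finally show "(L x * L y) $$ (i,j) = (\<beta> x y \<cdot>\<^sub>m L (x \<otimes> y)) $$ (i,j)" .
  qed (auto simp: L_def)
  have rep: "proj_rep G H \<beta> m L"
    unfolding proj_rep_def using mpos Lc L1 Lmul by auto
  define v where "v = vec m (\<lambda>i. f (e i))"
  have vc: "v \<in> carrier_vec m" unfolding v_def by simp
  have vnz: "v \<noteq> 0\<^sub>v m"
  proof
    assume "v = 0\<^sub>v m"
    obtain i0 where i0: "i0 < m" "e i0 = \<one>" using esurj[OF H_one] by blast
    have "v $ i0 = f \<one>" using i0 unfolding v_def by simp
    then show False using \<open>v = 0\<^sub>v m\<close> i0 f1 by simp
  qed
  have veig: "L a *\<^sub>v v = lam \<cdot>\<^sub>v v"
  proof (rule eq_vecI)
    fix i assume "i < dim_vec (lam \<cdot>\<^sub>v v)"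
    then have i: "i < m" unfolding v_def by simp
    have ei: "e i \<in> H" using eH[OF i] .
    obtain j0 where j0: "j0 < m" "e j0 = inv a \<otimes> e i" using esurj[OF H_mult[OF H_inv ei]] by blast
    have eiG: "e i \<in> carrier G" using ei H_sub by auto
    have aj0: "a \<otimes> e j0 = e i" using j0 aG eiG by (simp add: m_assoc[symmetric])
    have cond: "e i = a \<otimes> e j \<longleftrightarrow> j = j0" if j: "j < m" for j
    proof -
      have ejG: "e j \<in> carrier G" using eH[OF j] H_sub by auto
      have ej0G: "e j0 \<in> carrier G" using eH[OF j0(1)] H_sub by auto
      have "e i = a \<otimes> e j \<longleftrightarrow> a \<otimes> e j0 = a \<otimes> e j" using aj0 by auto
      also have "\<dots> \<longleftrightarrow> e j0 = e j" using Units_l_cancel[of a "e j0" "e j"] Units_eq aG ej0G ejG by auto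
      also have "\<dots> \<longleftrightarrow> j = j0" using einj[OF j j0(1)] by auto
      finally show ?thesis .
    qed
    have "(L a *\<^sub>v v) $ i = (\<Sum>j = 0..<m. L a $$ (i,j) * f (e j))"
      using i by (simp add: L_def v_def scalar_prod_def)
    also have "\<dots> = (\<Sum>j = 0..<m. if j = j0 then \<beta> a (e j0) * f (e j0) else 0)"
      by (rule sum.cong) (use i cond in \<open>auto simp: L_def\<close>)
    also have "\<dots> = \<beta> a (e j0) * f (e j0)" using j0 by simp
    also have "\<dots> = lam * f (e i)" using feig eH[OF j0(1)] aj0 by auto
    also have "\<dots> = (lam \<cdot>\<^sub>v v) $ i" using i unfolding v_def by simp
    finally show "(L a *\<^sub>v v) $ i = (lam \<cdot>\<^sub>v v) $ i" .
  qed (simp add: L_def v_def)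
  show ?thesis using rep vc vnz veig by blast
qed

end



context
  fixes G (structure) and \<omega> and a
  assumes grp: "group G" and coc: "normalized_3_cocycle G \<omega>" and aG: "a \<in> carrier G"
begin

interpretation group G by (rule grp)

lemma eig_fun:
  assumes fin: "finite (carrier G)" and lam: "lam ^ ord a = pp G \<omega> a (ord a)"
  shows "\<exists>f. f \<one> \<noteq> 0 \<and> (\<forall>g\<in>carrier G. cocycle_beta G \<omega> a a g * f g = lam * f (a \<otimes> g))"
proof -
  define n where "n = ord a"
  have npos: "n \<ge> 1" using ord_ge_1[OF fin aG] n_def by simp
  have an: "a [^] n = \<one>" using n_def aG by simp
  have lnz: "lam \<noteq> 0"
  proof
    assume "lam = 0"
    then have "pp G \<omega> a n = 0" using lam npos n_def by (simp add: power_0_left)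
    then show False using pp_nz[OF grp coc aG] by simp
  qed
  have ppn: "pp G \<omega> a n = lam ^ n" using lam n_def by simp
  have ppadd: "pp G \<omega> a (j + n) = pp G \<omega> a j * pp G \<omega> a n" for j
  proof (induction j)
    case 0
    then show ?case by (simp add: pp_def)
  next
    case (Suc j)
    have "a [^] (j + n) = a [^] j" using nat_pow_mult[OF aG, of j n] an aG by simp
    then show ?case using Suc pp_Suc[OF grp coc aG] by (simp add: ac_simps)
  qed
  define cc where "cc j = pp G \<omega> a j / lam ^ j" for j
  have ccn: "cc (j + n) = cc j" for j
    unfolding cc_def ppadd ppn using lnz by (simp add: power_add)
  have ccq: "cc (j + q * n) = cc j" for j q
  proof (induction q)
    case (Suc q)
    have "j + Suc q * n = (j + q * n) + n" by simp
    then show ?case using ccn[of "j + q * n"] Suc by (simp only:)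
  qed simp
  have ccw1: "cc i = cc j" if "a [^] i = a [^] j" "i \<le> j" for i j
  proof -
    have "a [^] (j - i) = \<one>" using pow_eq_div2[OF aG, of j i] that by simp
    then have "n dvd (j - i)" using pow_eq_id[OF aG] n_def by simp
    then obtain q where "j - i = n * q" by blast
    then have "j = i + q * n" using that(2) by (simp add: mult.commute)
    then show ?thesis using ccq[of i q] by (simp only:)
  qed
  have ccw: "cc i = cc j" if "a [^] i = a [^] j" for i j
  proof (cases "i \<le> j")
    case True
    show ?thesis using ccw1[OF that True] .
  next
    case False
    then have "j \<le> i" by simp
    then show ?thesis using ccw1[OF that[symmetric]] by simp
  qed
  define f where "f g = (if \<exists>j::nat. g = a [^] j then cc (SOME j. g = a [^] (j::nat)) else 0)" for g
  have fpow: "f (a [^] j) = cc j" for j :: nat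
  proof -
    have ex: "\<exists>j'::nat. a [^] j = a [^] j'" by blast
    have "a [^] j = a [^] (SOME j'. a [^] j = a [^] (j'::nat))" using someI_ex[OF ex] .
    then have "cc (SOME j'. a [^] j = a [^] (j'::nat)) = cc j" by (rule ccw[symmetric])
    moreover have "f (a [^] j) = cc (SOME j'. a [^] j = a [^] (j'::nat))" unfolding f_def using ex by (simp only: if_True)
    ultimately show ?thesis by simp
  qed
  have f1: "f \<one> = 1" using fpow[of 0] by (simp add: cc_def pp_def)
  have feig: "cocycle_beta G \<omega> a a g * f g = lam * f (a \<otimes> g)" if g: "g \<in> carrier G" for g
  proof (cases "\<exists>j::nat. g = a [^] j")
    case True
    then obtain j :: nat where j: "g = a [^] j" by blast
    have "a \<otimes> g = a [^] Suc j" by (simp only: j nat_pow_Suc2[OF aG])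
    then have "f (a \<otimes> g) = cc (Suc j)" using fpow[of "Suc j"] by (simp only:)
    moreover have "f g = cc j" using j fpow by simp
    moreover have "cocycle_beta G \<omega> a a (a [^] j) * cc j = lam * cc (Suc j)"
      unfolding cc_def pp_Suc[OF grp coc aG] using lnz by (simp add: field_simps)
    ultimately show ?thesis using j by simp
  next
    case False
    have "\<not> (\<exists>j::nat. a \<otimes> g = a [^] j)"
    proof
      assume "\<exists>j::nat. a \<otimes> g = a [^] j"
      then obtain j :: nat where j: "a \<otimes> g = a [^] j" by blast
      have "a [^] (n - 1) \<otimes> a = a [^] n" using npos nat_pow_Suc[of a "n - 1"] by simp
      then have "a [^] (n - 1) \<otimes> (a \<otimes> g) = g" using an g aG by (simp add: m_assoc[symmetric])
      then have "g = a [^] (n - 1 + j)" using j nat_pow_mult[OF aG] by simp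
      then show False using False by blast
    qed
    then show ?thesis using False unfolding f_def by simp
  qed
  show ?thesis using f1 feig by (intro exI[of _ f]) simp
qed


lemma exists_irred:
  assumes fin: "finite (carrier G)" and lam: "lam ^ ord a = pp G \<omega> a (ord a)"
  shows "\<exists>k \<rho>. irreducible_proj_rep G (centralizer_of G a) (cocycle_beta G \<omega> a) k \<rho> \<and> \<rho> a = lam \<cdot>\<^sub>m 1\<^sub>m k"
proof -
  let ?H = "centralizer_of G a" and ?b = "cocycle_beta G \<omega> a"
  have HG: "?H \<subseteq> carrier G" using H_sub[OF grp coc aG] .
  have Hmul: "\<forall>x\<in>?H. \<forall>y\<in>?H. x \<otimes> y \<in> ?H" using H_mult[OF grp coc aG] by blast
  have aH: "a \<in> ?H" using H_a[OF grp coc aG] .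
  obtain f where f1: "f \<one> \<noteq> 0" and feig: "\<forall>g\<in>carrier G. ?b a g * f g = lam * f (a \<otimes> g)"
    using eig_fun[OF fin lam] by blast
  have feig': "\<forall>g\<in>?H. ?b a g * f g = lam * f (a \<otimes> g)" using feig HG by blast
  obtain m L v where rep: "proj_rep G ?H ?b m L" and vc: "v \<in> carrier_vec m" and vnz: "v \<noteq> 0\<^sub>v m"
    and veig: "L a *\<^sub>v v = lam \<cdot>\<^sub>v v"
    using regular_rep[OF grp coc aG fin feig' f1] by blast
  have Lc: "\<forall>x\<in>?H. L x \<in> carrier_mat m m"
    and Lm: "\<forall>x\<in>?H. \<forall>y\<in>?H. L x * L y = ?b x y \<cdot>\<^sub>m L (x \<otimes> y)"
    using rep unfolding proj_rep_def by auto
  have La: "L a \<in> carrier_mat m m" using Lc aH by auto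
  define W where "W = {w \<in> carrier_vec m. L a *\<^sub>v w = lam \<cdot>\<^sub>v w}"
  have comm: "L a * L x = L x * L a" if x: "x \<in> ?H" for x
  proof -
    have "L a * L x = ?b a x \<cdot>\<^sub>m L (a \<otimes> x)" using Lm aH x by blast
    also have "\<dots> = ?b x a \<cdot>\<^sub>m L (x \<otimes> a)"
      using beta_a_comm[OF grp coc aG x] H_comm[OF grp coc aG x] by simp
    also have "\<dots> = L x * L a" using Lm aH x by simp
    finally show ?thesis .
  qed
  have inv: "invariant_subspace ?H m L W"
    unfolding invariant_subspace_def
  proof (intro conjI ballI allI)
    show "W \<subseteq> carrier_vec m" unfolding W_def by auto
    have "L a *\<^sub>v 0\<^sub>v m = 0\<^sub>v m" using La by (intro eq_vecI) auto
    moreover have "lam \<cdot>\<^sub>v 0\<^sub>v m = 0\<^sub>v m" by (intro eq_vecI) auto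
    ultimately show "0\<^sub>v m \<in> W" unfolding W_def by simp
  next
    fix v w assume v: "v \<in> W" and w: "w \<in> W"
    have vc: "v \<in> carrier_vec m" and wc: "w \<in> carrier_vec m" using v w unfolding W_def by auto
    have "L a *\<^sub>v (v + w) = L a *\<^sub>v v + L a *\<^sub>v w" using mult_add_distrib_mat_vec[OF La vc wc] .
    also have "\<dots> = lam \<cdot>\<^sub>v v + lam \<cdot>\<^sub>v w" using v w unfolding W_def by simp
    also have "\<dots> = lam \<cdot>\<^sub>v (v + w)" using smult_add_distrib_vec[OF vc wc] by simp
    finally show "v + w \<in> W" unfolding W_def using vc wc by simp
  next
    fix c v assume v: "v \<in> W"
    have vc: "v \<in> carrier_vec m" using v unfolding W_def by auto
    have "L a *\<^sub>v (c \<cdot>\<^sub>v v) = c \<cdot>\<^sub>v (L a *\<^sub>v v)" using mult_mat_vec[OF La vc] .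
    also have "\<dots> = c \<cdot>\<^sub>v (lam \<cdot>\<^sub>v v)" using v unfolding W_def by simp
    also have "\<dots> = lam \<cdot>\<^sub>v (c \<cdot>\<^sub>v v)" by (simp add: smult_smult_assoc mult.commute)
    finally show "c \<cdot>\<^sub>v v \<in> W" unfolding W_def using vc by simp
  next
    fix x v assume x: "x \<in> ?H" and v: "v \<in> W"
    have vc: "v \<in> carrier_vec m" using v unfolding W_def by auto
    have Lx: "L x \<in> carrier_mat m m" using Lc x by auto
    have "L a *\<^sub>v (L x *\<^sub>v v) = (L a * L x) *\<^sub>v v" using assoc_mult_mat_vec[OF La Lx vc] by simp
    also have "\<dots> = (L x * L a) *\<^sub>v v" using comm[OF x] by simp
    also have "\<dots> = L x *\<^sub>v (lam \<cdot>\<^sub>v v)" using assoc_mult_mat_vec[OF Lx La vc] v unfolding W_def by simp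
    also have "\<dots> = lam \<cdot>\<^sub>v (L x *\<^sub>v v)" using mult_mat_vec[OF Lx vc] .
    finally show "L x *\<^sub>v v \<in> W" unfolding W_def using Lx vc by simp
  qed
  have Wn0: "W \<noteq> {0\<^sub>v m}" using vc vnz veig unfolding W_def by auto
  have eigW: "\<forall>w\<in>W. L a *\<^sub>v w = lam \<cdot>\<^sub>v w" unfolding W_def by auto
  obtain d0 \<sigma>0 where "proj_rep G ?H ?b d0 \<sigma>0 \<and> \<sigma>0 a = lam \<cdot>\<^sub>m 1\<^sub>m d0"
    using restrict_rep[OF rep inv Wn0 aH Hmul eigW] by blast
  then have exP: "\<exists>d \<sigma>. proj_rep G ?H ?b d \<sigma> \<and> \<sigma> a = lam \<cdot>\<^sub>m 1\<^sub>m d" by blast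
  define P where "P d = (\<exists>\<sigma>. proj_rep G ?H ?b d \<sigma> \<and> \<sigma> a = lam \<cdot>\<^sub>m 1\<^sub>m d)" for d
  define k where "k = (LEAST d. P d)"
  have Pk: "P k" unfolding k_def using exP LeastI_ex[of P] unfolding P_def by blast
  then obtain \<rho> where rho: "proj_rep G ?H ?b k \<rho>" and ra: "\<rho> a = lam \<cdot>\<^sub>m 1\<^sub>m k" unfolding P_def by blast
  have "irreducible_proj_rep G ?H ?b k \<rho>"
    unfolding irreducible_proj_rep_def
  proof (intro conjI allI impI rho)
    fix W' assume inv': "invariant_subspace ?H k \<rho> W'"
    show "W' = {0\<^sub>v k} \<or> W' = carrier_vec k"
    proof (rule ccontr)
      assume "\<not> (W' = {0\<^sub>v k} \<or> W' = carrier_vec k)"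
      then have n0: "W' \<noteq> {0\<^sub>v k}" and nc: "W' \<noteq> carrier_vec k" by auto
      have "\<forall>w\<in>W'. \<rho> a *\<^sub>v w = lam \<cdot>\<^sub>v w"
      proof
        fix w assume "w \<in> W'"
        then have wc: "w \<in> carrier_vec k" using inv' unfolding invariant_subspace_def by auto
        show "\<rho> a *\<^sub>v w = lam \<cdot>\<^sub>v w" unfolding ra using smult_mat_mult_vec[of "1\<^sub>m k" k k w lam] wc by simp
      qed
      from restrict_rep[OF rho inv' n0 aH Hmul this] nc
      obtain d \<sigma> where "proj_rep G ?H ?b d \<sigma>" "\<sigma> a = lam \<cdot>\<^sub>m 1\<^sub>m d" "d < k" by blast
      then have "P d" "d < k" unfolding P_def by auto
      then show False using not_less_Least[of d P] unfolding k_def by blast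
    qed
  qed
  then show ?thesis using ra by blast
qed

end

lemma twists_char:
  assumes grp: "group G" and fin: "finite (carrier G)" and coc: "normalized_3_cocycle G \<omega>"
  shows "center_twists G \<omega> = {t. \<exists>a\<in>carrier G. t ^ group.ord G a = pp G \<omega> a (group.ord G a)}"
proof safe
  fix t assume "t \<in> center_twists G \<omega>"
  then obtain a k \<rho> where aG: "a \<in> carrier G"
    and irr: "irreducible_proj_rep G (centralizer_of G a) (cocycle_beta G \<omega> a) k \<rho>"
    and ra: "\<rho> a = t \<cdot>\<^sub>m 1\<^sub>m k"
    unfolding center_twists_def by blast
  have rep: "proj_rep G (centralizer_of G a) (cocycle_beta G \<omega> a) k \<rho>"
    using irr unfolding irreducible_proj_rep_def by blast
  have "t ^ group.ord G a = pp G \<omega> a (group.ord G a)"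
    using twist_root[OF grp coc aG rep ra] .
  then show "\<exists>a\<in>carrier G. t ^ group.ord G a = pp G \<omega> a (group.ord G a)" using aG by blast
next
  fix t a assume aG: "a \<in> carrier G" and t: "t ^ group.ord G a = pp G \<omega> a (group.ord G a)"
  show "t \<in> center_twists G \<omega>"
    using exists_irred[OF grp coc aG fin t] aG unfolding center_twists_def by blast
qed




lemma cube_roots: "{t::complex. t ^ 3 = 1} = {1, cis (2*pi/3), cis (2*pi/3) ^ 2}"
proof -
  define z where "z = cis (2*pi/3)"
  have "z ^ 3 = cis (real 3 * (2*pi/3))" unfolding z_def by (rule DeMoivre)
  also have "real 3 * (2*pi/3) = 2 * pi" by simp
  finally have z3: "z ^ 3 = 1" by simp
  have "Re z = -1/2" unfolding z_def using cos_120 by simp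
  then have z1: "z \<noteq> 1" by auto
  have z0: "z \<noteq> 0" unfolding z_def by simp
  have z21: "z ^ 2 \<noteq> 1"
  proof
    assume "z ^ 2 = 1"
    then have "z ^ 3 = z" by (simp add: power3_eq_cube power2_eq_square mult.assoc)
    then show False using z3 z1 by simp
  qed
  have z2z: "z ^ 2 \<noteq> z"
  proof
    assume "z ^ 2 = z"
    then have "z * z = z * 1" by (simp add: power2_eq_square)
    then show False using z0 z1 by (metis mult_left_cancel)
  qed
  have "(z ^ 2) ^ 3 = (z ^ 3) ^ 2" by (simp only: power_mult[symmetric] mult.commute)
  then have "(z ^ 2) ^ 3 = 1" using z3 by simp
  then have sub: "{1, z, z ^ 2} \<subseteq> {t::complex. t ^ 3 = 1}" using z3 by simp
  have c3: "card {1, z, z ^ 2} = 3" using z1 z21 z2z by auto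
  have "card {t::complex. t ^ 3 = 1} = 3" using card_roots_unity_eq[of 3] by simp
  then have "{1, z, z ^ 2} = {t::complex. t ^ 3 = 1}"
    using card_subset_eq[OF finite_roots_unity sub] c3 by simp
  then show ?thesis unfolding z_def by simp
qed

lemma sq_roots_m1: "{t::complex. t ^ 2 = -1} = {\<i>, -\<i>}"
proof safe
  fix t :: complex assume t: "t ^ 2 = -1" "t \<noteq> \<i>"
  have "(t - \<i>) * (t + \<i>) = t ^ 2 + 1" by (simp add: algebra_simps power2_eq_square)
  then have "(t - \<i>) * (t + \<i>) = 0" using t by simp
  then have "t + \<i> = 0" using t(2) by auto
  then show "t = - \<i>" by (simp add: eq_neg_iff_add_eq_0)
qed (auto simp: power2_eq_square)


lemma lemma5p10_aux:
  fixes G :: "('g, 'b) monoid_scheme" (structure) and \<omega> :: "'g \<Rightarrow> 'g \<Rightarrow> 'g \<Rightarrow> complex"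
  assumes "group G" and "finite (carrier G)"
    and "normalized_3_cocycle G \<omega>"
    and "card (center_twists G \<omega>) = 3"
  shows "(group_exponent G = 3 \<and>
            center_twists G \<omega> = {1, cis (2*pi/3), cis (2*pi/3) ^ 2})
       \<or> ((group_exponent G = 2 \<or> group_exponent G = 4) \<and>
            center_twists G \<omega> = {1, \<i>, - \<i>})"
proof -
  note grp = assms(1) and fin = assms(2) and coc = assms(3) and c3 = assms(4)
  interpret group G by (rule grp)
  let ?T = "center_twists G \<omega>"
  define R where "R a = {t::complex. t ^ ord a = pp G \<omega> a (ord a)}" for a
  have Tdef: "?T = (\<Union>a\<in>carrier G. R a)" using twists_char[OF grp fin coc] unfolding R_def by auto
  have finT: "finite ?T" using c3 by (metis card.infinite zero_neq_numeral)
  have ordpos: "ord a \<ge> 1" if "a \<in> carrier G" for a using ord_ge_1[OF fin that] .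
  have cardR: "card (R a) = ord a" if a: "a \<in> carrier G" for a
    unfolding R_def using card_nth_roots[OF pp_nz[OF grp coc a]] ordpos[OF a] by simp
  have RT: "R a \<subseteq> ?T" if "a \<in> carrier G" for a using Tdef that by auto
  have ordle3: "ord a \<le> 3" if a: "a \<in> carrier G" for a
    using card_mono[OF finT RT[OF a]] cardR[OF a] c3 by simp
  have pp1: "pp G \<omega> \<one> 1 = 1"
    unfolding pp_def using beta_one_left[OF grp coc one_closed one_closed] by simp
  have R1: "R \<one> = {1}" unfolding R_def using pp1 by simp
  have oneT: "1 \<in> ?T" using RT[OF one_closed] R1 by auto
  have ord1: "a = \<one>" if "a \<in> carrier G" "ord a = 1" for a using ord_eq_1 that by blast
  have ord2: "pp G \<omega> a 2 = 1 \<or> pp G \<omega> a 2 = -1" if a: "a \<in> carrier G" and o2: "ord a = 2" for a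
  proof -
    have "a [^] (2::nat) = \<one>" using pow_ord_eq_1[OF a] o2 by simp
    then have aa: "a \<otimes> a = \<one>" using a by (simp add: numeral_2_eq_2)
    have n1: "\<omega> a a \<one> = 1" "\<omega> a \<one> a = 1" "\<omega> \<one> a a = 1"
      using om_norm[OF grp coc a a a] a by auto
    have nz: "\<omega> a a a \<noteq> 0" using om_nz[OF grp coc a a a a] .
    have pp0: "pp G \<omega> a 0 = 1" unfolding pp_def by simp
    have "pp G \<omega> a 2 = pp G \<omega> a (Suc (Suc 0))" by (simp only: numeral_2_eq_2)
    also have "\<dots> = cocycle_beta G \<omega> a a (a [^] (0::nat)) * cocycle_beta G \<omega> a a (a [^] (Suc 0))"
      unfolding pp_Suc[OF grp coc a] pp0 by simp
    also have "\<dots> = cocycle_beta G \<omega> a a \<one> * cocycle_beta G \<omega> a a a"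
      using nat_pow_eone[OF a] a by simp
    also have "\<dots> = \<omega> a a a" unfolding cocycle_beta_def using n1 nz by simp
    finally have ppa: "pp G \<omega> a 2 = \<omega> a a a" .
    have "\<omega> a a a * \<omega> a (a \<otimes> a) a * \<omega> a a a = \<omega> (a \<otimes> a) a a * \<omega> a a (a \<otimes> a)"
      using om_coc[OF grp coc a a a a a] .
    then have "\<omega> a a a * \<omega> a \<one> a * \<omega> a a a = \<omega> \<one> a a * \<omega> a a \<one>" by (simp only: aa)
    then have "\<omega> a a a * \<omega> a a a = 1" by (simp only: n1 mult_1_right mult_1_left)
    then have "(\<omega> a a a) ^ 2 = 1" by (simp only: power2_eq_square)
    then show ?thesis unfolding ppa using power2_eq_1_iff by blast
  qed
  have R2: "R a = {1, -1} \<or> R a = {\<i>, -\<i>}" if a: "a \<in> carrier G" and o2: "ord a = 2" for a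
  proof -
    have "R a = {t. t ^ 2 = pp G \<omega> a 2}" unfolding R_def o2 ..
    moreover have "{t::complex. t ^ 2 = 1} = {1, -1}" by (auto simp: power2_eq_1_iff)
    ultimately show ?thesis using ord2[OF a o2] sq_roots_m1 by (elim disjE) simp_all
  qed
  have expo: "group_exponent G = n"
    if b: "b \<in> carrier G" and ob: "ord b = n" and n: "n > 0" and dv: "\<forall>x\<in>carrier G. ord x dvd n" for b n
    unfolding group_exponent_def
  proof (rule Least_equality)
    have "x [^] n = \<one>" if x: "x \<in> carrier G" for x
      using pow_eq_id[OF x, of n] dv x by simp
    then show "0 < n \<and> (\<forall>x\<in>carrier G. x [^] n = \<one>)" using n by blast
  next
    fix m :: nat assume m: "0 < m \<and> (\<forall>x\<in>carrier G. x [^] m = \<one>)"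
    then have "b [^] m = \<one>" using b by blast
    then have "n dvd m" using pow_eq_id[OF b] ob by simp
    then show "n \<le> m" using m by (simp add: dvd_imp_le)
  qed
  show ?thesis
  proof (cases "\<exists>a\<in>carrier G. ord a = 3")
    case True
    then obtain a where a: "a \<in> carrier G" and o3: "ord a = 3" by blast
    have RaT: "R a = ?T" using card_subset_eq[OF finT RT[OF a]] cardR[OF a] o3 c3 by simp
    then have "1 \<in> R a" using oneT by simp
    then have "pp G \<omega> a 3 = 1" unfolding R_def o3 by simp
    then have Tc: "?T = {t. t ^ 3 = 1}" using RaT unfolding R_def o3 by simp
    have no2: "ord b \<noteq> 2" if b: "b \<in> carrier G" for b
    proof
      assume o2: "ord b = 2"
      have sub: "R b \<subseteq> {t. t ^ 3 = 1}" using RT[OF b] Tc by simp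
      have "(-1::complex) ^ 3 \<noteq> 1" by simp
      moreover have "\<i> ^ 3 \<noteq> 1" by (simp add: power3_eq_cube complex_eq_iff)
      ultimately show False using R2[OF b o2] sub by auto
    qed
    have "\<forall>x\<in>carrier G. ord x dvd 3"
    proof
      fix x assume x: "x \<in> carrier G"
      have "ord x = 1 \<or> ord x = 3" using ordpos[OF x] ordle3[OF x] no2[OF x] by linarith
      then show "ord x dvd 3" by auto
    qed
    then have "group_exponent G = 3" using expo[OF a o3] by simp
    then show ?thesis using Tc cube_roots by simp
  next
    case False
    have ord12: "ord x = 1 \<or> ord x = 2" if x: "x \<in> carrier G" for x
    proof -
      have "ord x \<noteq> 3" using False x by blast
      then show ?thesis using ordpos[OF x] ordle3[OF x] by linarith
    qed
    have "\<exists>a\<in>carrier G. ord a = 2"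
    proof (rule ccontr)
      assume "\<not> (\<exists>a\<in>carrier G. ord a = 2)"
      then have "\<forall>x\<in>carrier G. x = \<one>" using ord12 ord1 by blast
      then have "?T = R \<one>" using Tdef by auto
      then show False using R1 c3 by simp
    qed
    then obtain a where a: "a \<in> carrier G" and o2: "ord a = 2" by blast
    have Tsub: "?T \<subseteq> {1, -1, \<i>, -\<i>}"
    proof
      fix t assume "t \<in> ?T"
      then obtain b where b: "b \<in> carrier G" and tb: "t \<in> R b" using Tdef by auto
      show "t \<in> {1, -1, \<i>, -\<i>}"
      proof (cases "ord b = 1")
        case True
        then have "b = \<one>" using ord1 b by blast
        then show ?thesis using tb R1 by simp
      next
        case False
        then have "ord b = 2" using ord12 b by blast
        then show ?thesis using R2[OF b] tb by auto
      qed
    qed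
    have distinct: "(1::complex) \<noteq> -1" "(1::complex) \<noteq> \<i>" "(1::complex) \<noteq> -\<i>" "(-1::complex) \<noteq> \<i>"
      "(-1::complex) \<noteq> -\<i>" "\<i> \<noteq> -\<i>" by (auto simp: complex_eq_iff)
    have noplus: "R b = {\<i>, -\<i>}" if b: "b \<in> carrier G" and ob: "ord b = 2" for b
    proof (rule ccontr)
      assume "R b \<noteq> {\<i>, -\<i>}"
      then have Rb: "R b = {1, -1}" using R2[OF b ob] by blast
      then have m1: "-1 \<in> ?T" using RT[OF b] by auto
      have "\<i> \<in> ?T \<or> -\<i> \<in> ?T"
      proof (rule ccontr)
        assume "\<not> (\<i> \<in> ?T \<or> -\<i> \<in> ?T)"
        then have "?T \<subseteq> {1, -1}" using Tsub by auto
        then have "card ?T \<le> card {1::complex, -1}" by (intro card_mono) auto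
        then show False using c3 by simp
      qed
      then obtain t where t: "t \<in> ?T" "t = \<i> \<or> t = -\<i>" by blast
      then obtain b' where b': "b' \<in> carrier G" and tb: "t \<in> R b'" using Tdef by auto
      have "ord b' \<noteq> 1" using tb R1 ord1[OF b'] t distinct by (metis singletonD)
      then have ob': "ord b' = 2" using ord12[OF b'] by blast
      have "R b' \<noteq> {1, -1}" using tb t distinct by auto
      then have "R b' = {\<i>, -\<i>}" using R2[OF b' ob'] by blast
      then have "{1, -1, \<i>, -\<i>} \<subseteq> ?T" using RT[OF b'] oneT m1 by auto
      then have "card {1::complex, -1, \<i>, -\<i>} \<le> card ?T" using card_mono[OF finT] by blast
      then show False using c3 distinct by simp
    qed
    have Tsub2: "?T \<subseteq> {1, \<i>, -\<i>}"
    proof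
      fix t assume "t \<in> ?T"
      then obtain b where b: "b \<in> carrier G" and tb: "t \<in> R b" using Tdef by auto
      show "t \<in> {1, \<i>, -\<i>}"
      proof (cases "ord b = 1")
        case True
        then have "b = \<one>" using ord1 b by blast
        then show ?thesis using tb R1 by simp
      next
        case False
        then have "ord b = 2" using ord12 b by blast
        then show ?thesis using noplus[OF b] tb by auto
      qed
    qed
    have "card {1::complex, \<i>, -\<i>} = 3" using distinct by simp
    then have Teq: "?T = {1, \<i>, -\<i>}" using card_subset_eq[OF _ Tsub2] c3 by simp
    have "\<forall>x\<in>carrier G. ord x dvd 2" using ord12 by fastforce
    then have "group_exponent G = 2" using expo[OF a o2] by simp
    then show ?thesis using Teq by simp
  qed
qed


theorem lemma5p10:
  fixes G :: "('g, 'b) monoid_scheme" and \<omega> :: "'g \<Rightarrow> 'g \<Rightarrow> 'g \<Rightarrow> complex"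
  assumes "group G" and "finite (carrier G)"
    and "normalized_3_cocycle G \<omega>"
    and "card (center_twists G \<omega>) = 3"
  shows "(group_exponent G = 3 \<and>
            center_twists G \<omega> = {1, cis (2*pi/3), cis (2*pi/3) ^ 2})
       \<or> ((group_exponent G = 2 \<or> group_exponent G = 4) \<and>
            center_twists G \<omega> = {1, \<i>, - \<i>})"
  using lemma5p10_aux[OF assms] .


end
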